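(* Let $\hat e_1,\hat e_2$ be orthonormal vectors, $R_1=-I+2\hat e_1\otimes\hat e_1$, $R_2=-I+2\hat e_2\otimes\hat e_2$, let $V_1\in\mathbb{R}^{3\times3}$ be symmetric positive definite with eigenvalues $\lambda_1,\lambda_2,\lambda_3$ and orthonormal eigenvectors $\hat v_1,\hat v_2,\hat v_3$, and set $V_2=R_1V_1R_1^T$, $V_3=R_2V_2R_2^T$, $V_4=R_2V_1R_2^T$, assumed pairwise distinct. Consider the four twinning equations $$Q_1V_2-V_1=a_1\otimes\hat n_1,\quad Q_2V_3-V_2=a_2\otimes\hat n_2,\quad Q_3V_4-V_3=a_3\otimes\hat n_3,\quad Q_4V_1-V_4=a_4\otimes\hat n_4,$$ where the pairs $(V_1,V_2),(V_2,V_3),(V_3,V_4),(V_4,V_1)$ are related by the $180^\circ$ rotations about $\hat e_1,\hat e_2,\hat e_1,\hat e_2$ respectively. (a) If $(Q_m,a_m,\hat n_m)$, $m=1,\dots,4$, are the Type-I solutions with respect to these axes and $Q_1Q_2Q_3Q_4=I$, then $\sum_{i=1}^3\lambda_i^{-2}(\hat v_i\cdot\hat e_1)(\hat v_i\cdot\hat e_2)=0$ (i.e. $\hat e_1\cdot V_1^{-2}\hat e_2=0$). (b) If instead they are the Type-II solutions with respect to these axes and $Q_1Q_2Q_3Q_4=I$, then $\sum_{i=1}^3\lambda_i^{2}(\hat v_i\cdot\hat e_1)(\hat v_i\cdot\hat e_2)=0$ (i.e. $\hat e_1\cdot V_1^{2}\hat e_2=0$). (c) Let $V_1=\begin{pmatrix}1&0&0\\0&a&b\\0&b&a\end{pmatrix}$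 with $b>0$, positive definite, $\lambda_1=a-b<1<\lambda_3=a+b$, and let $\hat e_1=\frac1{\sqrt2}(1,-1,0)$, $\hat e_2=\frac1{\sqrt2}(1,1,0)$. If $\lambda_3=\lambda_1/\sqrt{2\lambda_1^2-1}$, then the identity in (a) holds; if $\lambda_3=\sqrt{2-\lambda_1^2}$, then the identity in (b) holds.
   Context: For a symmetric positive-definite $W$ and unit vector $\hat e$ with $W':=(-I+2\hat e\otimes\hat e)W(-I+2\hat e\otimes\hat e)\neq W$, the equation $QW'-W=a\otimes\hat n$ ($Q\in SO(3)$) has two solutions: the Type-I solution $\hat n=\hat e$, $a=2\big(\frac{W^{-1}\hat e}{|W^{-1}\hat e|^2}-W\hat e\big)$, $Q=\big(-I+2\frac{W^{-1}\hat e\otimes W^{-1}\hat e}{|W^{-1}\hat e|^2}\big)(-I+2\hat e\otimes\hat e)$; and the Type-II solution, with $a$ parallel to $W\hat e$ and $\hat n$ parallel to $\hat e-\frac{W^2\hat e}{|W\hat e|^2}$, $Q=\big(-I+2\frac{W\hat e\otimes W\hat e}{|W\hat e|^2}\big)(-I+2\hat e\otimes\hat e)$. "With respect to the axes" means: equation $m$ uses $W=V_m$ (indices mod 4) and $\hat e=\hat e_1$ for $m=1,3$, $\hat e=\hat e_2$ for $m=2,4$. *)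

theory Defs
  imports "HOL-Analysis.Analysis"
begin

type_synonym vec3 = "real^3"
type_synonym mat3 = "real^3^3"

definition outer :: "vec3 \<Rightarrow> vec3 \<Rightarrow> mat3" where
  "outer a b = (\<chi> i j. a $ i * b $ j)"

definition rot180 :: "vec3 \<Rightarrow> mat3" where
  "rot180 e = - mat 1 + 2 *\<^sub>R outer e e"

definition twin_partner :: "mat3 \<Rightarrow> vec3 \<Rightarrow> mat3" where
  "twin_partner W e = rot180 e ** W ** rot180 e"

definition twin_solution :: "mat3 \<Rightarrow> vec3 \<Rightarrow> mat3 \<Rightarrow> vec3 \<Rightarrow> vec3 \<Rightarrow> bool" where
  "twin_solution W e Q a n \<longleftrightarrow>
     rotation_matrix Q \<and> norm n = 1 \<and> Q ** twin_partner W e - W = outer a n"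

definition typeI_solution :: "mat3 \<Rightarrow> vec3 \<Rightarrow> mat3 \<Rightarrow> vec3 \<Rightarrow> vec3 \<Rightarrow> bool" where
  "typeI_solution W e Q a n \<longleftrightarrow>
     twin_solution W e Q a n \<and>
     n = e \<and>
     a = 2 *\<^sub>R ((1 / (norm (matrix_inv W *v e))\<^sup>2) *\<^sub>R (matrix_inv W *v e) - W *v e) \<and>
     Q = (- mat 1 + (2 / (norm (matrix_inv W *v e))\<^sup>2) *\<^sub>R
            outer (matrix_inv W *v e) (matrix_inv W *v e)) ** rot180 e"

definition typeII_solution :: "mat3 \<Rightarrow> vec3 \<Rightarrow> mat3 \<Rightarrow> vec3 \<Rightarrow> vec3 \<Rightarrow> bool" where
  "typeII_solution W e Q a n \<longleftrightarrow>
     twin_solution W e Q a n \<and>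
     (\<exists>c. a = c *\<^sub>R (W *v e)) \<and>
     (\<exists>d. n = d *\<^sub>R (e - (1 / (norm (W *v e))\<^sup>2) *\<^sub>R ((W ** W) *v e))) \<and>
     Q = (- mat 1 + (2 / (norm (W *v e))\<^sup>2) *\<^sub>R outer (W *v e) (W *v e)) ** rot180 e"

definition sym_posdef :: "mat3 \<Rightarrow> bool" where
  "sym_posdef V \<longleftrightarrow> transpose V = V \<and> (\<forall>x. x \<noteq> 0 \<longrightarrow> x \<bullet> (V *v x) > 0)"

end

theory Submission
  imports Defs
begin


definition Pm :: "vec3 \<Rightarrow> mat3" where
  "Pm x = - mat 1 + (2 / (norm x)\<^sup>2) *\<^sub>R outer x x"

lemma outer_mv: "outer a b *v x = (b \<bullet> x) *\<^sub>R a"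
  by (simp add: vec_eq_iff matrix_vector_mult_def outer_def inner_vec_def sum_distrib_left mult_ac)

lemma neg_mv: "(- A) *v (x::vec3) = - (A *v x)"
  by (simp add: vec_eq_iff matrix_vector_mult_def sum_negf)

lemma scaleR_mv: "(c *\<^sub>R A) *v (x::vec3) = c *\<^sub>R (A *v x)"
  by (simp add: vec_eq_iff matrix_vector_mult_def sum_distrib_left mult_ac)

lemma rot_mv: "rot180 e *v x = - x + (2 * (e \<bullet> x)) *\<^sub>R e"
  unfolding rot180_def matrix_vector_mult_add_rdistrib neg_mv scaleR_mv outer_mv by simp

lemma Pm_mv: "Pm u *v x = - x + (2 * (u \<bullet> x) / (norm u)\<^sup>2) *\<^sub>R u"
  unfolding Pm_def matrix_vector_mult_add_rdistrib neg_mv scaleR_mv outer_mv by simp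

lemma Pm_inv: assumes "u \<noteq> 0" shows "Pm u *v (Pm u *v x) = x"
proof -
  define k where "k = 2 * (u \<bullet> x) / (norm u)\<^sup>2"
  have n: "(norm u)\<^sup>2 \<noteq> 0" using assms by simp
  have "2 * (u \<bullet> (- x + k *\<^sub>R u)) / (norm u)\<^sup>2 = k"
    using n by (simp add: inner_add_right inner_diff_right inner_add_left inner_diff_left power2_norm_eq_inner[symmetric] k_def field_simps)
  then show ?thesis unfolding Pm_mv k_def[symmetric] by simp
qed

lemma Pm_fix: assumes "u \<noteq> 0" shows "Pm u *v u = u"
proof -
  have "2 * (u \<bullet> u) / (norm u)\<^sup>2 = 2" using assms by (simp add: power2_norm_eq_inner[symmetric])
  then show ?thesis unfolding Pm_mv by (simp add: scaleR_2)
qed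

lemma Pm_neg: "Pm (- u) = Pm u"
  by (simp add: Pm_def outer_def vec_eq_iff)

lemma rot_rot: assumes "norm e = 1" shows "rot180 e *v (rot180 e *v x) = x"
proof -
  have ee: "e \<bullet> e = 1" using assms by (simp add: power2_norm_eq_inner[symmetric])
  have "2 * (e \<bullet> (- x + (2 * (e \<bullet> x)) *\<^sub>R e)) = 2 * (e \<bullet> x)"
    by (simp add: inner_add_right inner_diff_right inner_add_left inner_diff_left ee)
  then show ?thesis unfolding rot_mv by simp
qed

lemma rot_inner: "(rot180 e *v x) \<bullet> y = x \<bullet> (rot180 e *v y)"
  by (simp add: rot_mv inner_add_right inner_diff_right inner_add_left inner_diff_left inner_add_left inner_commute)

lemma rot_norm: "norm e = 1 \<Longrightarrow> norm (rot180 e *v x) = norm x"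
proof -
  assume "norm e = 1"
  then have "(rot180 e *v x) \<bullet> (rot180 e *v x) = x \<bullet> x" by (simp add: rot_inner rot_rot)
  then show ?thesis by (simp add: norm_eq_sqrt_inner)
qed

lemma rot_self: assumes "norm e = 1" shows "rot180 e *v e = e"
proof -
  have ee: "e \<bullet> e = 1" using assms by (simp add: power2_norm_eq_inner[symmetric])
  show ?thesis unfolding rot_mv ee by (simp add: scaleR_2)
qed

lemma rot_perp: "e \<bullet> f = 0 \<Longrightarrow> rot180 e *v f = - f"
  by (simp add: rot_mv)

lemma rot_comm: assumes "e1 \<bullet> e2 = 0"
  shows "rot180 e1 *v (rot180 e2 *v x) = rot180 e2 *v (rot180 e1 *v x)"
proof -
  have "e2 \<bullet> e1 = 0" using assms by (simp add: inner_commute)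
  then show ?thesis using assms unfolding rot_mv
    by (simp add: inner_add_right inner_diff_right inner_add_left inner_diff_left scaleR_add_right)
qed

lemma rot_transpose: "transpose (rot180 e) = rot180 e"
  by (simp add: rot180_def vec_eq_iff transpose_def outer_def mat_def mult.commute)

lemma Pm_rot: "norm e = 1 \<Longrightarrow> Pm (rot180 e *v u) *v y = rot180 e *v (Pm u *v (rot180 e *v y))"
  unfolding Pm_mv
  by (simp add: rot_norm rot_inner rot_rot matrix_vector_mult_scaleR
       matrix_vector_right_distrib neg_mv matrix_vector_mult_diff_distrib)

lemma inv_props: assumes "invertible (A::mat3)"
  shows "A ** matrix_inv A = mat 1" "matrix_inv A ** A = mat 1"
proof -
  have "\<exists>A'. A ** A' = mat 1 \<and> A' ** A = mat 1" using assms by (simp add: invertible_def)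
  then have "A ** matrix_inv A = mat 1 \<and> matrix_inv A ** A = mat 1"
    unfolding matrix_inv_def by (rule someI_ex)
  then show "A ** matrix_inv A = mat 1" "matrix_inv A ** A = mat 1" by auto
qed

lemma inv_unique: assumes "(A::mat3) ** B = mat 1" shows "matrix_inv A = B"
proof -
  have "invertible A" using assms invertible_right_inverse by blast
  then have "matrix_inv A ** A = mat 1" by (rule inv_props)
  have "matrix_inv A = matrix_inv A ** (A ** B)" by (simp add: assms)
  also have "\<dots> = (matrix_inv A ** A) ** B" by (rule matrix_mul_assoc)
  also have "\<dots> = B" using \<open>matrix_inv A ** A = mat 1\<close> by simp
  finally show ?thesis .
qed

lemma spd_inv: assumes "sym_posdef V" shows "invertible V"
proof -
  have "\<forall>x. V *v x = 0 \<longrightarrow> x = 0"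
  proof (intro allI impI)
    fix x assume "V *v x = 0"
    then have "x \<bullet> (V *v x) = 0" by simp
    then show "x = 0" using assms unfolding sym_posdef_def by force
  qed
  then show ?thesis using matrix_left_invertible_ker invertible_left_inverse by blast
qed

lemma RR: assumes "norm e = 1" shows "rot180 e ** rot180 e = mat 1"
  using rot_rot[OF assms] by (simp add: matrix_eq flip: matrix_vector_mul_assoc)

lemma conj_inv: assumes "invertible V" "norm e = 1"
  shows "matrix_inv (rot180 e ** V ** rot180 e) = rot180 e ** matrix_inv V ** rot180 e"
proof (rule inv_unique)
  have "rot180 e ** V ** rot180 e ** (rot180 e ** matrix_inv V ** rot180 e)
      = rot180 e ** V ** (rot180 e ** rot180 e) ** matrix_inv V ** rot180 e"
    by (simp add: matrix_mul_assoc)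
  also have "\<dots> = rot180 e ** (V ** matrix_inv V) ** rot180 e"
    by (simp add: RR[OF assms(2)] matrix_mul_assoc)
  also have "\<dots> = mat 1" by (simp add: inv_props[OF assms(1)] RR[OF assms(2)])
  finally show "rot180 e ** V ** rot180 e ** (rot180 e ** matrix_inv V ** rot180 e) = mat 1" .
qed

lemma prod_key:
  assumes e: "norm e1 = 1" "norm e2 = 1" "e1 \<bullet> e2 = 0"
    and q1: "Q1 = Pm u ** rot180 e1"
    and q2: "Q2 = Pm (- (rot180 e1 *v w)) ** rot180 e2"
    and q3: "Q3 = Pm (- (rot180 e2 *v (rot180 e1 *v u))) ** rot180 e1"
    and q4: "Q4 = Pm (rot180 e2 *v w) ** rot180 e2"
    and p: "Q1 ** Q2 ** Q3 ** Q4 = mat 1"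
  shows "Pm u *v (Pm w *v (Pm u *v (Pm w *v x))) = x"
proof -
  define r1 where "r1 = (\<lambda>y. rot180 e1 *v y)"
  define r2 where "r2 = (\<lambda>y. rot180 e2 *v y)"
  define A where "A = (\<lambda>y. Pm u *v y)"
  define B where "B = (\<lambda>y. Pm w *v y)"
  have r11: "\<And>y. r1 (r1 y) = y" unfolding r1_def using rot_rot[OF e(1)] .
  have r22: "\<And>y. r2 (r2 y) = y" unfolding r2_def using rot_rot[OF e(2)] .
  have c: "\<And>y. r1 (r2 y) = r2 (r1 y)" unfolding r1_def r2_def using rot_comm[OF e(3)] .
  have rr: "\<And>z. r1 (r2 (r1 (r2 z))) = z" by (metis c r11 r22)
  have Q4: "Q4 *v x = r2 (B x)" unfolding q4 r2_def B_def
    by (simp add: Pm_rot[OF e(2)] rot_rot[OF e(2)] flip: matrix_vector_mul_assoc)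
  have Q3: "\<And>y. Q3 *v y = r2 (r1 (A (r1 (r2 (r1 y)))))" unfolding q3 r2_def r1_def A_def
    by (simp add: Pm_neg Pm_rot[OF e(2)] Pm_rot[OF e(1)] flip: matrix_vector_mul_assoc)
  have Q2: "\<And>y. Q2 *v y = r1 (B (r1 (r2 y)))" unfolding q2 r2_def r1_def B_def
    by (simp add: Pm_neg Pm_rot[OF e(1)] flip: matrix_vector_mul_assoc)
  have Q1: "\<And>y. Q1 *v y = A (r1 y)" unfolding q1 r1_def A_def
    by (simp flip: matrix_vector_mul_assoc)
  have "x = Q1 *v (Q2 *v (Q3 *v (Q4 *v x)))"
    by (simp add: matrix_vector_mul_assoc matrix_mul_assoc p)
  also have "\<dots> = A (B (A (B x)))"
    unfolding Q4 Q3 Q2 Q1 rr r22 r11 by simp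
  finally show ?thesis unfolding A_def B_def by simp
qed

lemma perp_key:
  assumes "u \<noteq> 0" "w \<noteq> 0" and h: "\<And>x. Pm u *v (Pm w *v (Pm u *v (Pm w *v x))) = x"
    and L: "L *v u = e1" "L *v w = e2" and e: "e1 \<bullet> e2 = 0" "norm e1 = 1"
  shows "u \<bullet> w = 0"
proof -
  define y where "y = Pm u *v w"
  have "Pm u *v (Pm w *v (Pm u *v (Pm w *v (Pm w *v y)))) = Pm w *v y" by (rule h)
  then have "Pm w *v y = y"
    unfolding Pm_inv[OF assms(2)] y_def Pm_inv[OF assms(1)] Pm_fix[OF assms(2)] by simp
  then have "- y + (2 * (w \<bullet> y) / (norm w)\<^sup>2) *\<^sub>R w = y" by (simp add: Pm_mv)
  then have "(2 * (w \<bullet> y) / (norm w)\<^sup>2) *\<^sub>R w = 2 *\<^sub>R y" by (simp add: scaleR_2 algebra_simps)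
  then have "L *v ((2 * (w \<bullet> y) / (norm w)\<^sup>2) *\<^sub>R w) = L *v (2 *\<^sub>R y)" by simp
  then have "(2 * (w \<bullet> y) / (norm w)\<^sup>2) *\<^sub>R e2 = 2 *\<^sub>R (- e2 + (2 * (u \<bullet> w) / (norm u)\<^sup>2) *\<^sub>R e1)"
    unfolding y_def Pm_mv by (simp add: matrix_vector_mult_scaleR matrix_vector_right_distrib L
       matrix_vector_mult_diff_distrib neg_mv flip: scaleR_2)
  then have "e1 \<bullet> ((2 * (w \<bullet> y) / (norm w)\<^sup>2) *\<^sub>R e2) = e1 \<bullet> (2 *\<^sub>R (- e2 + (2 * (u \<bullet> w) / (norm u)\<^sup>2) *\<^sub>R e1))"
    by simp
  moreover have "e1 \<bullet> e1 = 1" using e by (simp add: power2_norm_eq_inner[symmetric])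
  ultimately have "0 = 2 * (2 * (u \<bullet> w) / (norm u)\<^sup>2)"
    using e by (simp add: inner_add_right inner_diff_right)
  then show ?thesis using assms(1) by simp
qed

lemma mv_neg: "(A::mat3) *v (- x) = - (A *v x)"
  by (simp add: vec_eq_iff matrix_vector_mult_def sum_negf)

lemma conj_invble: assumes "invertible V" "norm e = 1"
  shows "invertible (rot180 e ** V ** rot180 e)"
proof -
  have "invertible (rot180 e)" using RR[OF assms(2)] invertible_def by blast
  then show ?thesis using assms(1) by (simp add: invertible_mult)
qed

lemma inv_sym: fixes V :: mat3 assumes "invertible V" "transpose V = V"
  shows "transpose (matrix_inv V) = matrix_inv V"
proof -
  have "transpose V ** transpose (matrix_inv V) = mat 1"
    by (simp add: inv_props[OF assms(1)] flip: matrix_transpose_mul)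
  then have "matrix_inv (transpose V) = transpose (matrix_inv V)" by (rule inv_unique)
  then show ?thesis using assms(2) by simp
qed

lemma sym_dot: assumes "transpose M = (M::mat3)"
  shows "e \<bullet> ((M ** M) *v f) = (M *v e) \<bullet> (M *v f)"
proof -
  have "e \<bullet> ((M ** M) *v f) = e \<bullet> (M *v (M *v f))" by (simp add: matrix_vector_mul_assoc)
  also have "\<dots> = (e v* M) \<bullet> (M *v f)" by (simp add: dot_lmul_matrix)
  also have "e v* M = M *v e" by (metis assms transpose_matrix_vector)
  finally show ?thesis .
qed

lemma sym_inner: assumes "transpose M = (M::mat3)"
  shows "(M *v x) \<bullet> y = x \<bullet> (M *v y)"
  by (metis assms dot_lmul_matrix inner_commute transpose_matrix_vector)

lemma sum13: "(\<Sum>i=(1::nat)..3. f i) = f 1 + f 2 + f 3"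
  by (simp add: numeral_3_eq_3 numeral_2_eq_2)

lemma parseval: fixes v :: "nat \<Rightarrow> vec3"
  assumes onb: "\<forall>i\<in>{1..3}. \<forall>j\<in>{1..3}. v i \<bullet> v j = (if i = j then 1 else 0)"
  shows "(x::vec3) \<bullet> y = (\<Sum>i=1..3. (v i \<bullet> x) * (v i \<bullet> y))"
proof -
  have o: "v 1 \<bullet> v 1 = 1" "v 2 \<bullet> v 2 = 1" "v 3 \<bullet> v 3 = 1"
     "v 1 \<bullet> v 2 = 0" "v 1 \<bullet> v 3 = 0" "v 2 \<bullet> v 3 = 0"
     "v 2 \<bullet> v 1 = 0" "v 3 \<bullet> v 1 = 0" "v 3 \<bullet> v 2 = 0"
    using onb by auto
  define z where "z = x - ((v 1 \<bullet> x) *\<^sub>R v 1 + (v 2 \<bullet> x) *\<^sub>R v 2 + (v 3 \<bullet> x) *\<^sub>R v 3)"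
  have zo: "v 1 \<bullet> z = 0" "v 2 \<bullet> z = 0" "v 3 \<bullet> z = 0"
    unfolding z_def inner_diff_right inner_add_right inner_scaleR_right o by simp_all
  have "z = 0"
  proof (rule ccontr)
    assume "z \<noteq> 0"
    let ?S = "{v 1, v 2, v 3, z}"
    have n0: "v 1 \<noteq> 0" "v 2 \<noteq> 0" "v 3 \<noteq> 0" using o by auto
    have "pairwise orthogonal ?S"
      unfolding pairwise_insert orthogonal_def using o zo
      by (auto simp: inner_commute)
    moreover have "0 \<notin> ?S" using n0 \<open>z \<noteq> 0\<close> by auto
    ultimately have "independent ?S" by (rule pairwise_orthogonal_independent)
    then have "card ?S \<le> DIM(vec3)" using independent_bound by blast
    moreover have "card ?S = 4"
    proof -
      have d: "v 1 \<noteq> v 2" "v 1 \<noteq> v 3" "v 2 \<noteq> v 3" "v 1 \<noteq> z" "v 2 \<noteq> z" "v 3 \<noteq> z"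
        using o zo by (metis zero_neq_one)+
      then show ?thesis by auto
    qed
    ultimately show False by simp
  qed
  then have xe: "x = (v 1 \<bullet> x) *\<^sub>R v 1 + (v 2 \<bullet> x) *\<^sub>R v 2 + (v 3 \<bullet> x) *\<^sub>R v 3"
    unfolding z_def by simp
  have "x \<bullet> y = ((v 1 \<bullet> x) *\<^sub>R v 1 + (v 2 \<bullet> x) *\<^sub>R v 2 + (v 3 \<bullet> x) *\<^sub>R v 3) \<bullet> y"
    using xe by simp
  also have "\<dots> = (\<Sum>i=1..3. (v i \<bullet> x) * (v i \<bullet> y))"
    unfolding sum13 inner_add_left inner_scaleR_left by simp
  finally show ?thesis .
qed

lemma common_setup:
  fixes e1 e2 :: vec3 and V1 V2 V3 V4 :: mat3
  assumes orth: "norm e1 = 1" "norm e2 = 1" "e1 \<bullet> e2 = 0"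
    and V2: "V2 = rot180 e1 ** V1 ** transpose (rot180 e1)"
    and V3: "V3 = rot180 e2 ** V2 ** transpose (rot180 e2)"
    and V4: "V4 = rot180 e2 ** V1 ** transpose (rot180 e2)"
  shows "V2 *v e2 = - (rot180 e1 *v (V1 *v e2))"
    "V3 *v e1 = - (rot180 e2 *v (rot180 e1 *v (V1 *v e1)))"
    "V4 *v e2 = rot180 e2 *v (V1 *v e2)"
proof -
  have e21: "e2 \<bullet> e1 = 0" using orth(3) by (simp add: inner_commute)
  have r12: "rot180 e1 *v e2 = - e2" by (rule rot_perp[OF orth(3)])
  have r21: "rot180 e2 *v e1 = - e1" by (rule rot_perp[OF e21])
  show "V2 *v e2 = - (rot180 e1 *v (V1 *v e2))"
    unfolding V2 rot_transpose by (simp add: r12 mv_neg flip: matrix_vector_mul_assoc)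
  show "V3 *v e1 = - (rot180 e2 *v (rot180 e1 *v (V1 *v e1)))"
    unfolding V3 V2 rot_transpose
    by (simp add: r21 mv_neg rot_self[OF orth(1)] flip: matrix_vector_mul_assoc)
  show "V4 *v e2 = rot180 e2 *v (V1 *v e2)"
    unfolding V4 rot_transpose by (simp add: rot_self[OF orth(2)] flip: matrix_vector_mul_assoc)
qed

lemma partA:
  fixes e1 e2 :: vec3 and V1 V2 V3 V4 :: mat3
    and lam :: "nat \<Rightarrow> real" and v :: "nat \<Rightarrow> vec3"
    and Q a n :: "nat \<Rightarrow> _"
  assumes orth: "norm e1 = 1" "norm e2 = 1" "e1 \<bullet> e2 = 0"
    and spd: "sym_posdef V1"
    and eig: "\<forall>i\<in>{1..3}. V1 *v v i = lam i *\<^sub>R v i"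
    and onb: "\<forall>i\<in>{1..3}. \<forall>j\<in>{1..3}. v i \<bullet> v j = (if i = j then 1 else 0)"
    and V2: "V2 = rot180 e1 ** V1 ** transpose (rot180 e1)"
    and V3: "V3 = rot180 e2 ** V2 ** transpose (rot180 e2)"
    and V4: "V4 = rot180 e2 ** V1 ** transpose (rot180 e2)"
    and t: "typeI_solution V1 e1 (Q 1) (a 1) (n 1)" "typeI_solution V2 e2 (Q 2) (a 2) (n 2)"
       "typeI_solution V3 e1 (Q 3) (a 3) (n 3)" "typeI_solution V4 e2 (Q 4) (a 4) (n 4)"
    and p: "Q 1 ** Q 2 ** Q 3 ** Q 4 = mat 1"
  shows "(\<Sum>i=1..3. (lam i) powi (-2) * (v i \<bullet> e1) * (v i \<bullet> e2)) = 0
          \<and> e1 \<bullet> ((matrix_inv V1 ** matrix_inv V1) *v e2) = 0"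
proof -
  define Vi where "Vi = matrix_inv V1"
  define u where "u = Vi *v e1"
  define w where "w = Vi *v e2"
  have i1: "invertible V1" by (rule spd_inv[OF spd])
  have sV: "transpose V1 = V1" using spd by (simp add: sym_posdef_def)
  have sVi: "transpose Vi = Vi" unfolding Vi_def by (rule inv_sym[OF i1 sV])
  have VVi: "V1 ** Vi = mat 1" "Vi ** V1 = mat 1" unfolding Vi_def using inv_props[OF i1] by auto
  have V2': "V2 = rot180 e1 ** V1 ** rot180 e1" using V2 by (simp add: rot_transpose)
  have V3': "V3 = rot180 e2 ** V2 ** rot180 e2" using V3 by (simp add: rot_transpose)
  have V4': "V4 = rot180 e2 ** V1 ** rot180 e2" using V4 by (simp add: rot_transpose)
  have i2: "invertible V2" unfolding V2' by (rule conj_invble[OF i1 orth(1)])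
  have mi3: "matrix_inv V3 = rot180 e2 ** matrix_inv V2 ** transpose (rot180 e2)"
    unfolding V3' conj_inv[OF i2 orth(2)] by (simp add: rot_transpose)
  have mi4: "matrix_inv V4 = rot180 e2 ** Vi ** transpose (rot180 e2)"
    unfolding V4' Vi_def conj_inv[OF i1 orth(2)] by (simp add: rot_transpose)
  have mi2': "matrix_inv V2 = rot180 e1 ** Vi ** transpose (rot180 e1)"
    unfolding V2' Vi_def conj_inv[OF i1 orth(1)] by (simp add: rot_transpose)
  note cs = common_setup[OF orth mi2' mi3 mi4]
  have q1: "Q 1 = Pm u ** rot180 e1" using t(1) by (simp add: typeI_solution_def Pm_def u_def Vi_def)
  have q2: "Q 2 = Pm (- (rot180 e1 *v w)) ** rot180 e2"
    using t(2) cs(1) by (simp add: typeI_solution_def Pm_def w_def)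
  have q3: "Q 3 = Pm (- (rot180 e2 *v (rot180 e1 *v u))) ** rot180 e1"
    using t(3) cs(2) by (simp add: typeI_solution_def Pm_def u_def)
  have q4: "Q 4 = Pm (rot180 e2 *v w) ** rot180 e2"
    using t(4) cs(3) by (simp add: typeI_solution_def Pm_def w_def)
  have Lu: "V1 *v u = e1" unfolding u_def by (simp add: matrix_vector_mul_assoc VVi)
  have Lw: "V1 *v w = e2" unfolding w_def by (simp add: matrix_vector_mul_assoc VVi)
  have u0: "u \<noteq> 0" using Lu orth(1) by auto
  have w0: "w \<noteq> 0" using Lw orth(2) by auto
  have key: "\<And>x. Pm u *v (Pm w *v (Pm u *v (Pm w *v x))) = x"
    by (rule prod_key[OF orth q1 q2 q3 q4 p])
  have uw: "u \<bullet> w = 0" by (rule perp_key[OF u0 w0 key Lu Lw orth(3) orth(1)])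
  have d: "e1 \<bullet> ((Vi ** Vi) *v e2) = u \<bullet> w" unfolding u_def w_def by (rule sym_dot[OF sVi])
  have vi: "v i \<bullet> u = (1 / lam i) * (v i \<bullet> e1)" "v i \<bullet> w = (1 / lam i) * (v i \<bullet> e2)"
    if "i \<in> {1..3}" for i
  proof -
    have ev: "V1 *v v i = lam i *\<^sub>R v i" using eig that by auto
    have vv: "v i \<bullet> v i = 1" using onb that by auto
    have "lam i \<noteq> 0"
    proof
      assume "lam i = 0"
      then have "Vi *v (V1 *v v i) = 0" using ev by simp
      then have "v i = 0" by (simp add: matrix_vector_mul_assoc VVi)
      then show False using vv by simp
    qed
    have "Vi *v v i = Vi *v ((1 / lam i) *\<^sub>R (V1 *v v i))" using ev \<open>lam i \<noteq> 0\<close> by simp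
    also have "\<dots> = (1 / lam i) *\<^sub>R v i"
      by (simp add: matrix_vector_mult_scaleR matrix_vector_mul_assoc VVi)
    finally have "Vi *v v i = (1 / lam i) *\<^sub>R v i" .
    then show "v i \<bullet> u = (1 / lam i) * (v i \<bullet> e1)" "v i \<bullet> w = (1 / lam i) * (v i \<bullet> e2)"
      unfolding u_def w_def by (simp_all flip: sym_inner[OF sVi])
  qed
  have "u \<bullet> w = (\<Sum>i=1..3. (v i \<bullet> u) * (v i \<bullet> w))" by (rule parseval[OF onb])
  also have "\<dots> = (\<Sum>i=1..3. (lam i) powi (-2) * (v i \<bullet> e1) * (v i \<bullet> e2))"
    by (rule sum.cong) (auto simp: vi power_int_minus_divide power2_eq_square)
  finally show ?thesis using uw d unfolding Vi_def by simp
qed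

lemma partB:
  fixes e1 e2 :: vec3 and V1 V2 V3 V4 :: mat3
    and lam :: "nat \<Rightarrow> real" and v :: "nat \<Rightarrow> vec3"
    and Q a n :: "nat \<Rightarrow> _"
  assumes orth: "norm e1 = 1" "norm e2 = 1" "e1 \<bullet> e2 = 0"
    and spd: "sym_posdef V1"
    and eig: "\<forall>i\<in>{1..3}. V1 *v v i = lam i *\<^sub>R v i"
    and onb: "\<forall>i\<in>{1..3}. \<forall>j\<in>{1..3}. v i \<bullet> v j = (if i = j then 1 else 0)"
    and V2: "V2 = rot180 e1 ** V1 ** transpose (rot180 e1)"
    and V3: "V3 = rot180 e2 ** V2 ** transpose (rot180 e2)"
    and V4: "V4 = rot180 e2 ** V1 ** transpose (rot180 e2)"
    and t: "typeII_solution V1 e1 (Q 1) (a 1) (n 1)" "typeII_solution V2 e2 (Q 2) (a 2) (n 2)"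
       "typeII_solution V3 e1 (Q 3) (a 3) (n 3)" "typeII_solution V4 e2 (Q 4) (a 4) (n 4)"
    and p: "Q 1 ** Q 2 ** Q 3 ** Q 4 = mat 1"
  shows "(\<Sum>i=1..3. (lam i)\<^sup>2 * (v i \<bullet> e1) * (v i \<bullet> e2)) = 0
          \<and> e1 \<bullet> ((V1 ** V1) *v e2) = 0"
proof -
  define Vi where "Vi = matrix_inv V1"
  define u where "u = V1 *v e1"
  define w where "w = V1 *v e2"
  have i1: "invertible V1" by (rule spd_inv[OF spd])
  have sV: "transpose V1 = V1" using spd by (simp add: sym_posdef_def)
  have VVi: "V1 ** Vi = mat 1" "Vi ** V1 = mat 1" unfolding Vi_def using inv_props[OF i1] by auto
  note cs = common_setup[OF orth V2 V3 V4]
  have q1: "Q 1 = Pm u ** rot180 e1" using t(1) by (simp add: typeII_solution_def Pm_def u_def)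
  have q2: "Q 2 = Pm (- (rot180 e1 *v w)) ** rot180 e2"
    using t(2) cs(1) by (simp add: typeII_solution_def Pm_def w_def)
  have q3: "Q 3 = Pm (- (rot180 e2 *v (rot180 e1 *v u))) ** rot180 e1"
    using t(3) cs(2) by (simp add: typeII_solution_def Pm_def u_def)
  have q4: "Q 4 = Pm (rot180 e2 *v w) ** rot180 e2"
    using t(4) cs(3) by (simp add: typeII_solution_def Pm_def w_def)
  have Lu: "Vi *v u = e1" unfolding u_def by (simp add: matrix_vector_mul_assoc VVi)
  have Lw: "Vi *v w = e2" unfolding w_def by (simp add: matrix_vector_mul_assoc VVi)
  have u0: "u \<noteq> 0" using Lu orth(1) by auto
  have w0: "w \<noteq> 0" using Lw orth(2) by auto
  have key: "\<And>x. Pm u *v (Pm w *v (Pm u *v (Pm w *v x))) = x"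
    by (rule prod_key[OF orth q1 q2 q3 q4 p])
  have uw: "u \<bullet> w = 0" by (rule perp_key[OF u0 w0 key Lu Lw orth(3) orth(1)])
  have d: "e1 \<bullet> ((V1 ** V1) *v e2) = u \<bullet> w" unfolding u_def w_def by (rule sym_dot[OF sV])
  have vi: "v i \<bullet> u = lam i * (v i \<bullet> e1)" "v i \<bullet> w = lam i * (v i \<bullet> e2)"
    if "i \<in> {1..3}" for i
  proof -
    have ev: "V1 *v v i = lam i *\<^sub>R v i" using eig that by auto
    then show "v i \<bullet> u = lam i * (v i \<bullet> e1)" "v i \<bullet> w = lam i * (v i \<bullet> e2)"
      unfolding u_def w_def by (simp_all flip: sym_inner[OF sV])
  qed
  have "u \<bullet> w = (\<Sum>i=1..3. (v i \<bullet> u) * (v i \<bullet> w))" by (rule parseval[OF onb])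
  also have "\<dots> = (\<Sum>i=1..3. (lam i)\<^sup>2 * (v i \<bullet> e1) * (v i \<bullet> e2))"
    by (rule sum.cong) (auto simp: vi power2_eq_square)
  finally show ?thesis using uw d by simp
qed

lemma Wv: "(vector [vector [1, 0, 0], vector [0, p, q], vector [0, q, p]] :: mat3) *v vector [x, y, z]
   = (vector [x, p*y+q*z, q*y+p*z] :: vec3)"
  by (simp add: vec_eq_iff forall_3 matrix_vector_mult_def sum_3)

lemma inner3: "(vector [a,b,c] :: vec3) \<bullet> vector [x,y,z] = a*x + b*y + c*z"
  by (simp add: inner_vec_def sum_3)

lemma partC:
  fixes p q :: real and W :: mat3 and f1 f2 :: vec3
  assumes W: "W = vector [vector [1, 0, 0], vector [0, p, q], vector [0, q, p]]"
    and q: "q > 0" and spd: "sym_posdef W" and l1: "p - q < 1" and l3: "1 < p + q"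
    and f1: "f1 = (1 / sqrt 2) *\<^sub>R vector [1, -1, 0]" and f2: "f2 = (1 / sqrt 2) *\<^sub>R vector [1, 1, 0]"
  shows "(p + q = (p - q) / sqrt (2 * (p - q)\<^sup>2 - 1)
             \<longrightarrow> f1 \<bullet> ((matrix_inv W ** matrix_inv W) *v f2) = 0)
        \<and> (p + q = sqrt (2 - (p - q)\<^sup>2)
             \<longrightarrow> f1 \<bullet> ((W ** W) *v f2) = 0)"
proof -
  define c where "c = 1 / sqrt 2"
  have sV: "transpose W = W" using spd by (simp add: sym_posdef_def)
  have i1: "invertible W" by (rule spd_inv[OF spd])
  define Vi where "Vi = matrix_inv W"
  have sVi: "transpose Vi = Vi" unfolding Vi_def by (rule inv_sym[OF i1 sV])
  have VVi: "Vi ** W = mat 1" unfolding Vi_def using inv_props[OF i1] by auto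
  have "(vector [0, 1, -1] :: vec3) \<bullet> (W *v vector [0, 1, -1]) > 0"
    using spd unfolding sym_posdef_def
    by (metis (no_types) vector_3(2) zero_index zero_neq_one)
  then have pq: "p - q > 0" unfolding W Wv inner3 by simp
  have c2: "c * c = 1 / 2" unfolding c_def by (simp add: power_divide flip: power2_eq_square)
  show ?thesis
  proof (intro conjI impI)
    assume h: "p + q = sqrt (2 - (p - q)\<^sup>2)"
    have "0 < sqrt (2 - (p - q)\<^sup>2)" using h l3 by simp
    then have pos: "2 - (p - q)\<^sup>2 > 0" by simp
    have "(p + q)\<^sup>2 = 2 - (p - q)\<^sup>2" using h pos by simp
    then have pq1: "p*p + q*q = 1" by (simp add: power2_eq_square algebra_simps)
    have "f1 \<bullet> ((W ** W) *v f2) = (W *v f1) \<bullet> (W *v f2)" by (rule sym_dot[OF sV])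
    also have "\<dots> = c * c * (1 - p*p - q*q)"
      unfolding f1 f2 c_def[symmetric] matrix_vector_mult_scaleR W Wv by (simp add: inner3)
    also have "\<dots> = 0" using pq1 by simp
    finally show "f1 \<bullet> ((W ** W) *v f2) = 0" .
  next
    assume h: "p + q = (p - q) / sqrt (2 * (p - q)\<^sup>2 - 1)"
    have pos: "2 * (p - q)\<^sup>2 - 1 > 0"
    proof (rule ccontr)
      assume "\<not> ?thesis"
      then have "sqrt (2 * (p - q)\<^sup>2 - 1) \<le> 0" by simp
      then have "(p - q) / sqrt (2 * (p - q)\<^sup>2 - 1) \<le> 0" using pq by (simp add: divide_nonneg_nonpos)
      then show False using h l3 by simp
    qed
    have "(p + q) * sqrt (2 * (p - q)\<^sup>2 - 1) = p - q" using h pos by simp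
    then have "(p + q)\<^sup>2 * (2 * (p - q)\<^sup>2 - 1) = (p - q)\<^sup>2"
      using pos by (metis power_mult_distrib real_sqrt_pow2 less_imp_le)
    then have key: "(p*p - q*q) * (p*p - q*q) = (p*p + q*q)"
      by (simp add: power2_eq_square algebra_simps)
    define D where "D = p*p - q*q"
    have D: "D > 0" unfolding D_def using pq l3
      by (metis mult_pos_pos square_diff_square_factored add.commute less_trans zero_less_one)
    define G1 where "G1 = (vector [1, - p / D, q / D] :: vec3)"
    define G2 where "G2 = (vector [1, p / D, - q / D] :: vec3)"
    have Dn: "D \<noteq> 0" using D by simp
    have b1: "p * (- p / D) + q * (q / D) = - (p*p - q*q) / D" using Dn by (simp add: field_simps)
    have b2: "p * (p / D) + q * (- q / D) = (p*p - q*q) / D" using Dn by (simp add: field_simps)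
    have a1: "p * (- p / D) + q * (q / D) = -1" "q * (- p / D) + p * (q / D) = 0"
      "p * (p / D) + q * (- q / D) = 1" "q * (p / D) + p * (- q / D) = 0"
      using Dn unfolding b1 b2 D_def[symmetric] by (simp_all add: field_simps)
    have WG1: "W *v G1 = vector [1, -1, 0]" unfolding W G1_def Wv a1 by simp
    have WG2: "W *v G2 = vector [1, 1, 0]" unfolding W G2_def Wv a1 by simp
    have "Vi *v vector [1, -1, 0] = G1" unfolding WG1[symmetric]
      by (simp add: matrix_vector_mul_assoc VVi)
    moreover have "Vi *v vector [1, 1, 0] = G2" unfolding WG2[symmetric]
      by (simp add: matrix_vector_mul_assoc VVi)
    moreover have "f1 \<bullet> ((Vi ** Vi) *v f2) = (Vi *v f1) \<bullet> (Vi *v f2)" by (rule sym_dot[OF sVi])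
    ultimately have "f1 \<bullet> ((Vi ** Vi) *v f2) = c * c * (G1 \<bullet> G2)"
      unfolding f1 f2 c_def[symmetric] matrix_vector_mult_scaleR by simp
    also have "G1 \<bullet> G2 = 1 - (p*p + q*q) / (D * D)"
      unfolding G1_def G2_def inner3 using D by (simp add: field_simps)
    also have "\<dots> = 0"
    proof -
      have DD: "p*p + q*q = D * D" using key by (simp add: D_def)
      show ?thesis unfolding DD using Dn by simp
    qed
    finally show "f1 \<bullet> ((matrix_inv W ** matrix_inv W) *v f2) = 0" unfolding Vi_def by simp
  qed
qed


theorem mainTheorem10:
  fixes e1 e2 :: vec3 and V1 V2 V3 V4 :: mat3
    and lam :: "nat \<Rightarrow> real" and v :: "nat \<Rightarrow> vec3"
    and Q a n :: "nat \<Rightarrow> _"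
  assumes orth: "norm e1 = 1" "norm e2 = 1" "e1 \<bullet> e2 = 0"
    and spd: "sym_posdef V1"
    and eig: "\<forall>i\<in>{1..3}. V1 *v v i = lam i *\<^sub>R v i"
    and onb: "\<forall>i\<in>{1..3}. \<forall>j\<in>{1..3}. v i \<bullet> v j = (if i = j then 1 else 0)"
    and V2: "V2 = rot180 e1 ** V1 ** transpose (rot180 e1)"
    and V3: "V3 = rot180 e2 ** V2 ** transpose (rot180 e2)"
    and V4: "V4 = rot180 e2 ** V1 ** transpose (rot180 e2)"
    and dist: "V1 \<noteq> V2" "V1 \<noteq> V3" "V1 \<noteq> V4" "V2 \<noteq> V3" "V2 \<noteq> V4" "V3 \<noteq> V4"
  shows
    "((typeI_solution V1 e1 (Q 1) (a 1) (n 1) \<and> typeI_solution V2 e2 (Q 2) (a 2) (n 2) \<and>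
       typeI_solution V3 e1 (Q 3) (a 3) (n 3) \<and> typeI_solution V4 e2 (Q 4) (a 4) (n 4) \<and>
       Q 1 ** Q 2 ** Q 3 ** Q 4 = mat 1)
      \<longrightarrow> (\<Sum>i=1..3. (lam i) powi (-2) * (v i \<bullet> e1) * (v i \<bullet> e2)) = 0
          \<and> e1 \<bullet> ((matrix_inv V1 ** matrix_inv V1) *v e2) = 0)
   \<and> ((typeII_solution V1 e1 (Q 1) (a 1) (n 1) \<and> typeII_solution V2 e2 (Q 2) (a 2) (n 2) \<and>
       typeII_solution V3 e1 (Q 3) (a 3) (n 3) \<and> typeII_solution V4 e2 (Q 4) (a 4) (n 4) \<and>
       Q 1 ** Q 2 ** Q 3 ** Q 4 = mat 1)
      \<longrightarrow> (\<Sum>i=1..3. (lam i)\<^sup>2 * (v i \<bullet> e1) * (v i \<bullet> e2)) = 0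
          \<and> e1 \<bullet> ((V1 ** V1) *v e2) = 0)
   \<and> (\<forall>(p::real) (q::real) (W::mat3) (f1::vec3) (f2::vec3).
        W = vector [vector [1, 0, 0], vector [0, p, q], vector [0, q, p]] \<and>
        q > 0 \<and> sym_posdef W \<and> p - q < 1 \<and> 1 < p + q \<and>
        f1 = (1 / sqrt 2) *\<^sub>R vector [1, -1, 0] \<and> f2 = (1 / sqrt 2) *\<^sub>R vector [1, 1, 0]
      \<longrightarrow> (p + q = (p - q) / sqrt (2 * (p - q)\<^sup>2 - 1)
             \<longrightarrow> f1 \<bullet> ((matrix_inv W ** matrix_inv W) *v f2) = 0)
        \<and> (p + q = sqrt (2 - (p - q)\<^sup>2)
             \<longrightarrow> f1 \<bullet> ((W ** W) *v f2) = 0))"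
  proof -
  note A = partA[OF orth spd eig onb V2 V3 V4]
  note B = partB[OF orth spd eig onb V2 V3 V4]
  show ?thesis
  proof (intro conjI)
    show "\<forall>(p::real) (q::real) (W::mat3) (f1::vec3) (f2::vec3).
        W = vector [vector [1, 0, 0], vector [0, p, q], vector [0, q, p]] \<and>
        q > 0 \<and> sym_posdef W \<and> p - q < 1 \<and> 1 < p + q \<and>
        f1 = (1 / sqrt 2) *\<^sub>R vector [1, -1, 0] \<and> f2 = (1 / sqrt 2) *\<^sub>R vector [1, 1, 0]
      \<longrightarrow> (p + q = (p - q) / sqrt (2 * (p - q)\<^sup>2 - 1)
             \<longrightarrow> f1 \<bullet> ((matrix_inv W ** matrix_inv W) *v f2) = 0)
        \<and> (p + q = sqrt (2 - (p - q)\<^sup>2)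
             \<longrightarrow> f1 \<bullet> ((W ** W) *v f2) = 0)"
      using partC by blast
  qed (use A B in blast)+
qed

end
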